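(* Let $R$ be a ring, $B\in R^{m\times k}$, $B'\in R^{m\times(n-k)}$, and $\phi={}_B\phi_{B'}$. Then \[ \mathrm{Defect}(\mathcal B(\phi,-))\;\cong\;\frac{R^{1\times k}}{\{\,yB\mid y\in R^{1\times m},\ yB'=0\,\}} \] as left $R$-modules.
   Context: Let $R$ be a ring; $R\text{-}\mathbf{mod}$ denotes finitely presented left $R$-modules. $R\text{-}\mathbf{mod}\text{-}\mathbf{mod}$ is the category of finitely presented additive functors $R\text{-}\mathbf{mod}\to\mathbf{Ab}$. If $\mathcal G\in R\text{-}\mathbf{mod}\text{-}\mathbf{mod}$ has a presentation $\operatorname{Hom}(N',-)\xrightarrow{\operatorname{Hom}(\alpha,-)}\operatorname{Hom}(N,-)\to\mathcal G\to0$ with $\alpha:N\to N'$ in $R\text{-}\mathbf{mod}$, its (contravariant) defect is $\mathrm{Defect}(\mathcal G):=\ker(\alpha)$ computed in the category of left $R$-modules; this is well defined up to isomorphism (it is the value at $\mathcal G$ of the unique exact functor $R\text{-}\mathbf{mod}\text{-}\mathbf{mod}\to(R\text{-}\mathbf{Mod})^{\mathrm{op}}$ sending the forgetful functor $\mathcal F=\operatorname{Hom}(R,-)$ to $R^{1\times1}$ and $r:\mathcal F\to\mathcal F$ to right multiplication by $r$). A pp formula ${}_B\phi_{B'}$ is given by $B\in R^{m\times k}$, $B'\in R^{m\times(n-k)}$, and $\mathcal B(\phi,M)=\{\omega\in M^{k\times1}\mid\exists\,\omega'\in M^{(n-k)\times1}: B\omega+B'\omega'=0\}$; $\mathcal B(\phi,-)$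 (restricted to $R\text{-}\mathbf{mod}$) lies in $R\text{-}\mathbf{mod}\text{-}\mathbf{mod}$. *)

theory Defs
  imports Main "HOL-Library.FuncSet"
begin

record ('r, 'm) lmod =
  mcar :: "'m set"
  madd :: "'m \<Rightarrow> 'm \<Rightarrow> 'm"
  mzero :: "'m"
  msmul :: "'r \<Rightarrow> 'm \<Rightarrow> 'm"

definition lmodule :: "('r::ring_1, 'm) lmod \<Rightarrow> bool" where
  "lmodule M \<longleftrightarrow>
     mzero M \<in> mcar M \<and>
     (\<forall>x\<in>mcar M. \<forall>y\<in>mcar M. madd M x y \<in> mcar M) \<and>
     (\<forall>x\<in>mcar M. \<forall>y\<in>mcar M. \<forall>z\<in>mcar M. madd M (madd M x y) z = madd M x (madd M y z)) \<and>
     (\<forall>x\<in>mcar M. \<forall>y\<in>mcar M. madd M x y = madd M y x) \<and>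
     (\<forall>x\<in>mcar M. madd M (mzero M) x = x) \<and>
     (\<forall>x\<in>mcar M. \<exists>y\<in>mcar M. madd M x y = mzero M) \<and>
     (\<forall>r. \<forall>x\<in>mcar M. msmul M r x \<in> mcar M) \<and>
     (\<forall>r. \<forall>x\<in>mcar M. \<forall>y\<in>mcar M. msmul M r (madd M x y) = madd M (msmul M r x) (msmul M r y)) \<and>
     (\<forall>r s. \<forall>x\<in>mcar M. msmul M (r + s) x = madd M (msmul M r x) (msmul M s x)) \<and>
     (\<forall>r s. \<forall>x\<in>mcar M. msmul M (r * s) x = msmul M r (msmul M s x)) \<and>
     (\<forall>x\<in>mcar M. msmul M 1 x = x)"

definition lhom :: "('r::ring_1, 'm) lmod \<Rightarrow> ('r, 'n) lmod \<Rightarrow> ('m \<Rightarrow> 'n) \<Rightarrow> bool" where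
  "lhom M N f \<longleftrightarrow> f \<in> mcar M \<rightarrow> mcar N \<and>
     (\<forall>x\<in>mcar M. \<forall>y\<in>mcar M. f (madd M x y) = madd N (f x) (f y)) \<and>
     (\<forall>r. \<forall>x\<in>mcar M. f (msmul M r x) = msmul N r (f x))"

definition Hom :: "('r::ring_1, 'm) lmod \<Rightarrow> ('r, 'n) lmod \<Rightarrow> ('m \<Rightarrow> 'n) set" where
  "Hom M N = {f. lhom M N f \<and> f \<in> extensional (mcar M)}"

definition liso :: "('r::ring_1, 'm) lmod \<Rightarrow> ('r, 'n) lmod \<Rightarrow> bool" where
  "liso M N \<longleftrightarrow> (\<exists>f. lhom M N f \<and> bij_betw f (mcar M) (mcar N))"

definition submod :: "('r, 'm) lmod \<Rightarrow> 'm set \<Rightarrow> ('r, 'm) lmod" where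
  "submod M S = M\<lparr>mcar := S\<rparr>"

definition lker :: "('r, 'm) lmod \<Rightarrow> ('r, 'n) lmod \<Rightarrow> ('m \<Rightarrow> 'n) \<Rightarrow> 'm set" where
  "lker M N f = {x \<in> mcar M. f x = mzero N}"

definition coset :: "('r, 'm) lmod \<Rightarrow> 'm set \<Rightarrow> 'm \<Rightarrow> 'm set" where
  "coset M U a = {madd M a u | u. u \<in> U}"

definition quotmod :: "('r, 'm) lmod \<Rightarrow> 'm set \<Rightarrow> ('r, 'm set) lmod" where
  "quotmod M U = \<lparr> mcar = {coset M U a | a. a \<in> mcar M},
      madd = (\<lambda>X Y. {madd M x y | x y. x \<in> X \<and> y \<in> Y}),
      mzero = U,
      msmul = (\<lambda>r X. {madd M (msmul M r x) u | x u. x \<in> X \<and> u \<in> U}) \<rparr>"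

text \<open>The left module R^{1 x k} of row vectors (entries indexed by j < k), with left scalar action.\<close>
definition rowmod :: "nat \<Rightarrow> ('r::ring_1, nat \<Rightarrow> 'r) lmod" where
  "rowmod k = \<lparr> mcar = {..<k} \<rightarrow>\<^sub>E UNIV,
      madd = (\<lambda>x y. restrict (\<lambda>j. x j + y j) {..<k}),
      mzero = restrict (\<lambda>_. 0) {..<k},
      msmul = (\<lambda>r x. restrict (\<lambda>j. r * x j) {..<k}) \<rparr>"

text \<open>Row vector y in R^{1 x p} times matrix A in R^{p x k}.\<close>
definition vecmat :: "(nat \<Rightarrow> 'r::ring_1) \<Rightarrow> (nat \<Rightarrow> nat \<Rightarrow> 'r) \<Rightarrow> nat \<Rightarrow> nat \<Rightarrow> (nat \<Rightarrow> 'r)" where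
  "vecmat y A p k = restrict (\<lambda>j. \<Sum>i<p. y i * A i j) {..<k}"

text \<open>Finitely presented: R^{1 x q} --(.A)--> R^{1 x p} --f--> M --> 0 exact.\<close>
definition fp :: "('r::ring_1, 'm) lmod \<Rightarrow> bool" where
  "fp M \<longleftrightarrow> lmodule M \<and> (\<exists>p q A f. lhom (rowmod p) M f \<and> f ` mcar (rowmod p) = mcar M \<and>
      lker (rowmod p) M f = {vecmat y A q p | y. y \<in> mcar (rowmod q)})"

definition msum :: "('r, 'm) lmod \<Rightarrow> (nat \<Rightarrow> 'm) \<Rightarrow> nat \<Rightarrow> 'm" where
  "msum M f k = foldr (\<lambda>j. madd M (f j)) [0..<k] (mzero M)"

text \<open>B(phi, M) for phi = _B phi_B', B in R^{m x k}, B' in R^{m x (n-k)}; elements of M^{k x 1}.\<close>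
definition ppB :: "nat \<Rightarrow> nat \<Rightarrow> nat \<Rightarrow> (nat \<Rightarrow> nat \<Rightarrow> 'r::ring_1) \<Rightarrow> (nat \<Rightarrow> nat \<Rightarrow> 'r)
    \<Rightarrow> ('r, 'm) lmod \<Rightarrow> (nat \<Rightarrow> 'm) set" where
  "ppB m k n B B' M = {\<omega> \<in> {..<k} \<rightarrow>\<^sub>E mcar M. \<exists>\<omega>' \<in> {..<n-k} \<rightarrow>\<^sub>E mcar M.
      \<forall>i<m. madd M (msum M (\<lambda>j. msmul M (B i j) (\<omega> j)) k)
                   (msum M (\<lambda>j. msmul M (B' i j) (\<omega>' j)) (n-k)) = mzero M}"

text \<open>Test objects of R-mod are taken with carriers in the fixed type (nat => 'r) set;
  every finitely presented module is isomorphic to one of these (R^{1 x p}/K),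
  so this is an (essentially small) skeleton-type full subcategory equivalent to R-mod.\<close>
type_synonym 'r univ = "(nat \<Rightarrow> 'r) set"

text \<open>A presentation Hom(N',-) --Hom(alpha,-)--> Hom(N,-) --eta--> B(phi,-) --> 0,
  eta an (additive) natural transformation, exact at every object of R-mod.\<close>
definition is_presentation :: "nat \<Rightarrow> nat \<Rightarrow> nat \<Rightarrow> (nat \<Rightarrow> nat \<Rightarrow> 'r::ring_1) \<Rightarrow> (nat \<Rightarrow> nat \<Rightarrow> 'r)
    \<Rightarrow> ('r, 'n) lmod \<Rightarrow> ('r, 'n2) lmod \<Rightarrow> ('n \<Rightarrow> 'n2)
    \<Rightarrow> (('r, 'r univ) lmod \<Rightarrow> ('n \<Rightarrow> 'r univ) \<Rightarrow> nat \<Rightarrow> 'r univ) \<Rightarrow> bool" where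
  "is_presentation m k n B B' N N' \<alpha> \<eta> \<longleftrightarrow>
     fp N \<and> fp N' \<and> \<alpha> \<in> Hom N N' \<and>
     (\<forall>M::('r, 'r univ) lmod. fp M \<longrightarrow>
        (\<forall>f\<in>Hom N M. \<eta> M f \<in> ppB m k n B B' M) \<and>
        (\<forall>f\<in>Hom N M. \<forall>g\<in>Hom N M.
           \<eta> M (restrict (\<lambda>x. madd M (f x) (g x)) (mcar N))
             = restrict (\<lambda>j. madd M (\<eta> M f j) (\<eta> M g j)) {..<k}) \<and>
        \<eta> M ` Hom N M = ppB m k n B B' M \<and>
        {compose (mcar N) h \<alpha> | h. h \<in> Hom N' M}
          = {f \<in> Hom N M. \<eta> M f = restrict (\<lambda>_. mzero M) {..<k}}) \<and>
     (\<forall>(M::('r, 'r univ) lmod) (M'::('r, 'r univ) lmod). fp M \<and> fp M' \<longrightarrow>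
        (\<forall>g\<in>Hom M M'. \<forall>f\<in>Hom N M.
           \<eta> M' (compose (mcar N) g f) = restrict (\<lambda>j. g (\<eta> M f j)) {..<k}))"

end

theory Submission
  imports Defs
begin


section \<open>Abstract module facts\<close>

lemma lm_zero: "lmodule M \<Longrightarrow> mzero M \<in> mcar M" unfolding lmodule_def by (elim conjE) blast
lemma lm_add: "lmodule M \<Longrightarrow> x \<in> mcar M \<Longrightarrow> y \<in> mcar M \<Longrightarrow> madd M x y \<in> mcar M"
  unfolding lmodule_def by (elim conjE) blast
lemma lm_smul: "lmodule M \<Longrightarrow> x \<in> mcar M \<Longrightarrow> msmul M r x \<in> mcar M"
  unfolding lmodule_def by (elim conjE) blast
lemma lm_assoc: "lmodule M \<Longrightarrow> x \<in> mcar M \<Longrightarrow> y \<in> mcar M \<Longrightarrow> z \<in> mcar M \<Longrightarrow>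
   madd M (madd M x y) z = madd M x (madd M y z)" unfolding lmodule_def by (elim conjE) blast
lemma lm_comm: "lmodule M \<Longrightarrow> x \<in> mcar M \<Longrightarrow> y \<in> mcar M \<Longrightarrow> madd M x y = madd M y x"
  unfolding lmodule_def by (elim conjE) blast
lemma lm_lzero: "lmodule M \<Longrightarrow> x \<in> mcar M \<Longrightarrow> madd M (mzero M) x = x" unfolding lmodule_def by (elim conjE) blast
lemma lm_rzero: "lmodule M \<Longrightarrow> x \<in> mcar M \<Longrightarrow> madd M x (mzero M) = x"
  using lm_comm lm_lzero lm_zero by metis
lemma lm_inv: "lmodule M \<Longrightarrow> x \<in> mcar M \<Longrightarrow> \<exists>y\<in>mcar M. madd M x y = mzero M" unfolding lmodule_def by (elim conjE) blast
lemma lm_sdistr: "lmodule M \<Longrightarrow> x \<in> mcar M \<Longrightarrow> y \<in> mcar M \<Longrightarrow>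
   msmul M r (madd M x y) = madd M (msmul M r x) (msmul M r y)" unfolding lmodule_def by (elim conjE) blast

lemma lm_cancel:
  assumes M: "lmodule M" and a: "a \<in> mcar M" and b: "b \<in> mcar M" and c: "c \<in> mcar M"
    and e: "madd M a c = madd M b c"
  shows "a = b"
proof -
  obtain d where d: "d \<in> mcar M" "madd M c d = mzero M" using lm_inv[OF M c] by blast
  have "a = madd M (madd M a c) d" using lm_assoc[OF M a c d(1)] d lm_rzero[OF M a] by simp
  also have "\<dots> = madd M (madd M b c) d" using e by simp
  also have "\<dots> = b" using lm_assoc[OF M b c d(1)] d lm_rzero[OF M b] by simp
  finally show ?thesis .
qed

lemma lm_idem_zero:
  assumes M: "lmodule M" and a: "a \<in> mcar M" and e: "madd M a a = a"
  shows "a = mzero M"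
  using lm_cancel[OF M a lm_zero[OF M] a] e lm_lzero[OF M a] by simp

lemma lm_smul_zero: "lmodule M \<Longrightarrow> msmul M r (mzero M) = mzero M"
  by (metis lm_idem_zero lm_lzero lm_sdistr lm_smul lm_zero)

lemma hom_zero:
  assumes M: "lmodule M" and N: "lmodule N" and h: "lhom M N h"
  shows "h (mzero M) = mzero N"
proof -
  have hz: "h (mzero M) \<in> mcar N" using h lm_zero[OF M] unfolding lhom_def by auto
  have "madd N (h (mzero M)) (h (mzero M)) = h (mzero M)"
    using h lm_zero[OF M] lm_lzero[OF M lm_zero[OF M]] unfolding lhom_def by metis
  thus ?thesis using lm_idem_zero[OF N hz] by simp
qed

lemma hom_car: "lhom M N h \<Longrightarrow> x \<in> mcar M \<Longrightarrow> h x \<in> mcar N" by (auto simp: lhom_def)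
lemma hom_add: "lhom M N h \<Longrightarrow> x \<in> mcar M \<Longrightarrow> y \<in> mcar M \<Longrightarrow> h (madd M x y) = madd N (h x) (h y)"
  by (auto simp: lhom_def)
lemma hom_smul: "lhom M N h \<Longrightarrow> x \<in> mcar M \<Longrightarrow> h (msmul M r x) = msmul N r (h x)"
  by (auto simp: lhom_def)

lemma foldr_car:
  "lmodule M \<Longrightarrow> (\<And>j. j \<in> set xs \<Longrightarrow> g j \<in> mcar M) \<Longrightarrow> z \<in> mcar M \<Longrightarrow>
    foldr (\<lambda>j. madd M (g j)) xs z \<in> mcar M"
  by (induction xs) (auto intro: lm_add)

lemma msum_car: "lmodule M \<Longrightarrow> (\<And>j. j < t \<Longrightarrow> g j \<in> mcar M) \<Longrightarrow> msum M g t \<in> mcar M"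
  unfolding msum_def by (rule foldr_car) (auto intro: lm_zero)

lemma hom_foldr:
  "lhom M N h \<Longrightarrow> lmodule M \<Longrightarrow> (\<And>j. j \<in> set xs \<Longrightarrow> g j \<in> mcar M) \<Longrightarrow> z \<in> mcar M \<Longrightarrow>
    h (foldr (\<lambda>j. madd M (g j)) xs z) = foldr (\<lambda>j. madd N (h (g j))) xs (h z)"
  by (induction xs) (auto simp: hom_add foldr_car)

lemma hom_msum:
  assumes "lhom M N h" "lmodule M" "lmodule N" "\<And>j. j < t \<Longrightarrow> g j \<in> mcar M"
  shows "h (msum M g t) = msum N (\<lambda>j. h (g j)) t"
  unfolding msum_def using hom_foldr[OF assms(1,2), of "[0..<t]" g "mzero M"] assms
    hom_zero[OF assms(2,3,1)] lm_zero[OF assms(2)] by auto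

lemma foldr_zero: "lmodule M \<Longrightarrow> (\<And>j. j \<in> set xs \<Longrightarrow> g j = mzero M) \<Longrightarrow>
    foldr (\<lambda>j. madd M (g j)) xs (mzero M) = mzero M"
  by (induction xs) (auto simp: lm_lzero lm_zero)

lemma msum_zero: "lmodule M \<Longrightarrow> (\<And>j. j < t \<Longrightarrow> g j = mzero M) \<Longrightarrow> msum M g t = mzero M"
  unfolding msum_def by (rule foldr_zero) auto

lemma hom_comp: "lhom M N h \<Longrightarrow> lhom N P g \<Longrightarrow> lhom M P (\<lambda>x. g (h x))"
  unfolding lhom_def Pi_def by auto

lemma hom_inv:
  assumes M: "lmodule M" and h: "lhom M N h" and b: "bij_betw h (mcar M) (mcar N)"
  shows "lhom N M (inv_into (mcar M) h)"
proof -
  let ?i = "inv_into (mcar M) h"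
  have i1: "\<And>y. y \<in> mcar N \<Longrightarrow> ?i y \<in> mcar M" using b by (metis bij_betw_def inv_into_into)
  have i2: "\<And>y. y \<in> mcar N \<Longrightarrow> h (?i y) = y" using b by (simp add: bij_betw_imp_surj_on f_inv_into_f)
  have i3: "\<And>x. x \<in> mcar M \<Longrightarrow> ?i (h x) = x" using b by (simp add: bij_betw_imp_inj_on)
  show ?thesis unfolding lhom_def
  proof (intro conjI ballI allI)
    show "?i \<in> mcar N \<rightarrow> mcar M" using i1 by auto
  next
    fix x y assume x: "x \<in> mcar N" and y: "y \<in> mcar N"
    have "madd N x y = h (madd M (?i x) (?i y))" using hom_add[OF h i1[OF x] i1[OF y]] i2 x y by simp
    thus "?i (madd N x y) = madd M (?i x) (?i y)" using i3 lm_add[OF M i1[OF x] i1[OF y]] by simp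
  next
    fix r x assume x: "x \<in> mcar N"
    have "msmul N r x = h (msmul M r (?i x))" using hom_smul[OF h i1[OF x]] i2 x by simp
    thus "?i (msmul N r x) = msmul M r (?i x)" using i3 lm_smul[OF M i1[OF x]] by simp
  qed
qed



abbreviation RR :: "nat \<Rightarrow> (nat \<Rightarrow> 'r::ring_1) set" where "RR p \<equiv> mcar (rowmod p)"

lemma RR_eq: "RR p = {..<p} \<rightarrow>\<^sub>E UNIV" by (simp add: rowmod_def)
lemma radd: "madd (rowmod p) x y = restrict (\<lambda>j. x j + y j) {..<p}" by (simp add: rowmod_def)
lemma rsmul: "msmul (rowmod p) r x = restrict (\<lambda>j. r * x j) {..<p}" by (simp add: rowmod_def)
lemma rzero: "mzero (rowmod p) = restrict (\<lambda>_. 0) {..<p}" by (simp add: rowmod_def)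
lemma restrict_RR[simp]: "restrict g {..<p} \<in> RR p" by (simp add: rowmod_def)

lemma RR_ext: "x \<in> RR p \<Longrightarrow> y \<in> RR p \<Longrightarrow> (\<And>j. j < p \<Longrightarrow> x j = y j) \<Longrightarrow> x = y"
  unfolding RR_eq by (rule extensionalityI[of _ "{..<p}"]) (auto simp: PiE_iff)

lemma RR_restrict: "x \<in> RR p \<Longrightarrow> restrict x {..<p} = x"
  by (rule RR_ext) auto

lemma lmodule_rowmod: "lmodule (rowmod p)"
  unfolding lmodule_def radd rsmul rzero RR_eq
  apply (intro conjI ballI allI)
  apply (auto simp: PiE_iff extensional_def fun_eq_iff algebra_simps)
  subgoal for x by (rule bexI[of _ "restrict (\<lambda>j. - x j) {..<p}"]) (auto simp: fun_eq_iff)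
  done

lemma foldr_rowmod:
  assumes "z \<in> RR p"
  shows "foldr (\<lambda>j. madd (rowmod p) (g j)) xs z = restrict (\<lambda>s. (\<Sum>j\<leftarrow>xs. g j s) + z s) {..<p}"
  using assms by (induction xs) (auto simp: RR_restrict radd fun_eq_iff algebra_simps)

lemma msum_rowmod_smul:
  "msum (rowmod p) (\<lambda>j. msmul (rowmod p) (c j) (v j)) t = vecmat c v t p"
proof -
  have "msum (rowmod p) (\<lambda>j. msmul (rowmod p) (c j) (v j)) t =
     restrict (\<lambda>s. (\<Sum>j\<leftarrow>[0..<t]. msmul (rowmod p) (c j) (v j) s) + mzero (rowmod p) s) {..<p}"
    unfolding msum_def by (rule foldr_rowmod) (simp add: rzero)
  also have "\<dots> = vecmat c v t p"
    unfolding vecmat_def by (auto simp: rsmul rzero fun_eq_iff sum_list_sum_nth atLeast0LessThan)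
  finally show ?thesis .
qed

lemma vecmat_RR[simp]: "vecmat c v t p \<in> RR p" by (simp add: vecmat_def)

lemma msum_cong: "(\<And>j. j < t \<Longrightarrow> g j = g' j) \<Longrightarrow> msum M g t = msum M g' t"
  unfolding msum_def by (rule foldr_cong) auto

lemma hom_vecmat:
  assumes h: "lhom (rowmod p) M h" and M: "lmodule M" and v: "\<And>j. j < t \<Longrightarrow> v j \<in> RR p"
  shows "h (vecmat c v t p) = msum M (\<lambda>j. msmul M (c j) (h (v j))) t"
proof -
  have "h (vecmat c v t p) = msum M (\<lambda>j. h (msmul (rowmod p) (c j) (v j))) t"
    unfolding msum_rowmod_smul[symmetric]
    by (rule hom_msum[OF h lmodule_rowmod M]) (simp add: rsmul)
  also have "\<dots> = msum M (\<lambda>j. msmul M (c j) (h (v j))) t"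
    by (rule msum_cong) (simp add: hom_smul[OF h] v)
  finally show ?thesis .
qed

definition rsubm :: "nat \<Rightarrow> (nat \<Rightarrow> 'r::ring_1) set \<Rightarrow> bool" where
  "rsubm p W \<longleftrightarrow> W \<subseteq> RR p \<and> mzero (rowmod p) \<in> W \<and>
     (\<forall>x\<in>W. \<forall>y\<in>W. madd (rowmod p) x y \<in> W) \<and> (\<forall>r. \<forall>x\<in>W. msmul (rowmod p) r x \<in> W)"

lemma vecmat_add: "madd (rowmod p) (vecmat y A q p) (vecmat z A q p) =
   vecmat (madd (rowmod q) y z) A q p"
  by (auto simp: vecmat_def radd fun_eq_iff sum.distrib algebra_simps)

lemma vecmat_smul: "msmul (rowmod p) r (vecmat y A q p) = vecmat (msmul (rowmod q) r y) A q p"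
  by (auto simp: vecmat_def rsmul fun_eq_iff sum_distrib_left algebra_simps)

lemma vecmat_zero: "vecmat (mzero (rowmod q)) A q p = mzero (rowmod p)"
  by (auto simp: vecmat_def rzero fun_eq_iff)

lemma rsubm_rsp: "rsubm p {vecmat y A q p | y. y \<in> RR q}"
  unfolding rsubm_def
proof (intro conjI ballI allI)
  show "mzero (rowmod p) \<in> {vecmat y A q p |y. y \<in> RR q}"
    using vecmat_zero[symmetric] lm_zero[OF lmodule_rowmod] by blast
next
  fix x y assume "x \<in> {vecmat y A q p |y. y \<in> RR q}" "y \<in> {vecmat y A q p |y. y \<in> RR q}"
  then obtain a b where "x = vecmat a A q p" "y = vecmat b A q p" by blast
  then show "madd (rowmod p) x y \<in> {vecmat y A q p |y. y \<in> RR q}"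
    by (auto simp: vecmat_add intro!: exI[of _ "madd (rowmod q) a b"]) (simp add: radd)
next
  fix r x assume "x \<in> {vecmat y A q p |y. y \<in> RR q}"
  then obtain a where "x = vecmat a A q p" by blast
  then show "msmul (rowmod p) r x \<in> {vecmat y A q p |y. y \<in> RR q}"
    by (auto simp: vecmat_smul intro!: exI[of _ "msmul (rowmod q) r a"]) (simp add: rsmul)
qed auto



lemma RR_mem: "x \<in> RR p \<longleftrightarrow> x \<in> extensional {..<p}"
  by (simp add: RR_eq PiE_def)

lemma rfun: "x \<in> RR p \<Longrightarrow> x = (\<lambda>j. if j < p then x j else undefined)"
  by (auto simp: RR_mem extensional_def fun_eq_iff)

context fixes p :: nat and W :: "(nat \<Rightarrow> 'r::ring_1) set"
  assumes W: "rsubm p W"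
begin

lemma W_RR: "u \<in> W \<Longrightarrow> u \<in> RR p" using W by (auto simp: rsubm_def)
lemma W_zero: "mzero (rowmod p) \<in> W" using W by (auto simp: rsubm_def)
lemma W_add: "u \<in> W \<Longrightarrow> v \<in> W \<Longrightarrow> madd (rowmod p) u v \<in> W" using W by (auto simp: rsubm_def)
lemma W_smul: "u \<in> W \<Longrightarrow> msmul (rowmod p) r u \<in> W" using W by (auto simp: rsubm_def)

abbreviation "cs a \<equiv> coset (rowmod p) W a"
abbreviation "QQ \<equiv> quotmod (rowmod p) W"

lemma cs_mem: "x \<in> cs a \<longleftrightarrow> (\<exists>u\<in>W. x = madd (rowmod p) a u)"
  by (auto simp: coset_def)

lemma self_in: "a \<in> RR p \<Longrightarrow> a \<in> cs a"
  unfolding cs_mem using W_zero lm_rzero[OF lmodule_rowmod] by metis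

lemma cs_RR: "a \<in> RR p \<Longrightarrow> cs a \<subseteq> RR p"
  using cs_mem by (auto simp: radd)

lemma q_add:
  assumes a: "a \<in> RR p" and b: "b \<in> RR p"
  shows "madd QQ (cs a) (cs b) = cs (madd (rowmod p) a b)"
proof -
  have "{madd (rowmod p) x y |x y. x \<in> cs a \<and> y \<in> cs b} = cs (madd (rowmod p) a b)"
  proof (intro equalityI subsetI)
    fix z assume "z \<in> {madd (rowmod p) x y |x y. x \<in> cs a \<and> y \<in> cs b}"
    then obtain u v where uv: "u \<in> W" "v \<in> W" "z = madd (rowmod p) (madd (rowmod p) a u) (madd (rowmod p) b v)"
      unfolding cs_mem by blast
    have "z = madd (rowmod p) (madd (rowmod p) a b) (madd (rowmod p) u v)"
      using uv by (simp add: radd fun_eq_iff algebra_simps)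
    thus "z \<in> cs (madd (rowmod p) a b)" using W_add uv unfolding cs_mem by blast
  next
    fix z assume "z \<in> cs (madd (rowmod p) a b)"
    then obtain w where w: "w \<in> W" "z = madd (rowmod p) (madd (rowmod p) a b) w" unfolding cs_mem by blast
    have "z = madd (rowmod p) (madd (rowmod p) a w) (madd (rowmod p) b (mzero (rowmod p)))"
      using w by (simp add: radd rzero fun_eq_iff algebra_simps)
    thus "z \<in> {madd (rowmod p) x y |x y. x \<in> cs a \<and> y \<in> cs b}"
      using w W_zero unfolding cs_mem by blast
  qed
  thus ?thesis by (simp add: quotmod_def)
qed

lemma q_smul:
  assumes a: "a \<in> RR p"
  shows "msmul QQ r (cs a) = cs (msmul (rowmod p) r a)"
proof -
  have "{madd (rowmod p) (msmul (rowmod p) r x) u |x u. x \<in> cs a \<and> u \<in> W} = cs (msmul (rowmod p) r a)"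
  proof (intro equalityI subsetI)
    fix z assume "z \<in> {madd (rowmod p) (msmul (rowmod p) r x) u |x u. x \<in> cs a \<and> u \<in> W}"
    then obtain u v where uv: "u \<in> W" "v \<in> W" "z = madd (rowmod p) (msmul (rowmod p) r (madd (rowmod p) a u)) v"
      unfolding cs_mem by blast
    have "z = madd (rowmod p) (msmul (rowmod p) r a) (madd (rowmod p) (msmul (rowmod p) r u) v)"
      using uv by (simp add: radd rsmul fun_eq_iff algebra_simps)
    thus "z \<in> cs (msmul (rowmod p) r a)" using W_add W_smul uv unfolding cs_mem by blast
  next
    fix z assume "z \<in> cs (msmul (rowmod p) r a)"
    then obtain w where w: "w \<in> W" "z = madd (rowmod p) (msmul (rowmod p) r a) w" unfolding cs_mem by blast
    thus "z \<in> {madd (rowmod p) (msmul (rowmod p) r x) u |x u. x \<in> cs a \<and> u \<in> W}"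
      using self_in[OF a] by blast
  qed
  thus ?thesis by (simp add: quotmod_def)
qed

lemma q_zero: "mzero QQ = W" by (simp add: quotmod_def)
lemma q_car: "mcar QQ = cs ` RR p" by (auto simp: quotmod_def)

lemma cs_W: assumes "a \<in> W" shows "cs a = W"
proof (intro equalityI subsetI)
  fix z assume "z \<in> cs a" thus "z \<in> W" using W_add assms unfolding cs_mem by blast
next
  fix z assume z: "z \<in> W"
  have "z = madd (rowmod p) a (madd (rowmod p) (msmul (rowmod p) (-1) a) z)"
    using W_RR[OF z] W_RR[OF assms] by (subst rfun[of z p]) (auto simp: radd rsmul fun_eq_iff)
  thus "z \<in> cs a" using W_add W_smul assms z unfolding cs_mem by blast
qed

lemma cs_eq_W: assumes "a \<in> RR p" "cs a = W" shows "a \<in> W"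
  using self_in[OF assms(1)] assms(2) by simp

lemma cs_eq: assumes a: "a \<in> RR p" and b: "b \<in> RR p" and e: "cs a = cs b"
  shows "\<exists>u\<in>W. a = madd (rowmod p) b u"
proof -
  have "a \<in> cs b" using self_in[OF a] e by simp
  thus ?thesis unfolding cs_mem .
qed

lemma hom_cs: "lhom (rowmod p) QQ cs"
  unfolding lhom_def using q_add q_smul q_car by (auto simp: radd rsmul)

lemma lmodule_QQ: "lmodule QQ"
proof -
  note L = lmodule_rowmod[of p]
  have ex: "\<And>X. X \<in> mcar QQ \<Longrightarrow> \<exists>a\<in>RR p. X = cs a" using q_car by auto
  have z: "mzero QQ = cs (mzero (rowmod p))" using cs_W W_zero q_zero by simp
  show ?thesis unfolding lmodule_def
  proof (intro conjI ballI allI)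
    show "mzero QQ \<in> mcar QQ" using z q_car lm_zero[OF L] by auto
  next
    fix X Y assume "X \<in> mcar QQ" "Y \<in> mcar QQ"
    then obtain a b where "a \<in> RR p" "b \<in> RR p" "X = cs a" "Y = cs b" using ex by metis
    note h = this
    have "madd (rowmod p) a b \<in> RR p" using lm_add[OF L] h by blast
    thus "madd QQ X Y \<in> mcar QQ" using q_add q_car h by auto
    show "madd QQ X Y = madd QQ Y X"
      using q_add h lm_comm[OF L, of a b] by simp
  next
    fix X Y Z assume "X \<in> mcar QQ" "Y \<in> mcar QQ" "Z \<in> mcar QQ"
    then obtain a b c where "a \<in> RR p" "b \<in> RR p" "c \<in> RR p" "X = cs a" "Y = cs b" "Z = cs c" using ex by metis
    note h = this
    have "madd (rowmod p) a b \<in> RR p" "madd (rowmod p) b c \<in> RR p" using lm_add[OF L] h by blast+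
    thus "madd QQ (madd QQ X Y) Z = madd QQ X (madd QQ Y Z)"
      using q_add h lm_assoc[OF L, of a b c] by simp
  next
    fix X r s assume "X \<in> mcar QQ"
    then obtain a where a: "a \<in> RR p" "X = cs a" using ex by metis
    show "madd QQ (mzero QQ) X = X" using a z q_add[of "mzero (rowmod p)" a] lm_lzero[OF L a(1)] lm_zero[OF L] by simp
    show "\<exists>Y\<in>mcar QQ. madd QQ X Y = mzero QQ"
    proof -
      obtain b where b: "b \<in> RR p" "madd (rowmod p) a b = mzero (rowmod p)" using lm_inv[OF L a(1)] by blast
      have "cs b \<in> mcar QQ" using q_car b(1) by simp
      moreover have "madd QQ X (cs b) = mzero QQ" using a z q_add[OF a(1) b(1)] b(2) by simp
      ultimately show ?thesis by blast
    qed
    have ra: "msmul (rowmod p) r a \<in> RR p" "msmul (rowmod p) s a \<in> RR p" "msmul (rowmod p) (r+s) a \<in> RR p"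
      by (simp_all add: rsmul)
    show "msmul QQ r X \<in> mcar QQ" using a q_smul q_car ra by simp
    have e1: "msmul QQ (r+s) X = cs (msmul (rowmod p) (r+s) a)" using q_smul a by simp
    have e2: "madd QQ (msmul QQ r X) (msmul QQ s X) = cs (madd (rowmod p) (msmul (rowmod p) r a) (msmul (rowmod p) s a))"
      using q_smul q_add[OF ra(1,2)] a by simp
    have e3: "msmul (rowmod p) (r+s) a = madd (rowmod p) (msmul (rowmod p) r a) (msmul (rowmod p) s a)"
      by (simp add: rsmul radd fun_eq_iff algebra_simps)
    show "msmul QQ (r + s) X = madd QQ (msmul QQ r X) (msmul QQ s X)" using e1 e2 e3 by simp
    have f1: "msmul QQ r (msmul QQ s X) = cs (msmul (rowmod p) r (msmul (rowmod p) s a))"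
      using q_smul a ra by simp
    have f2: "msmul (rowmod p) (r*s) a = msmul (rowmod p) r (msmul (rowmod p) s a)"
      by (simp add: rsmul fun_eq_iff algebra_simps)
    show "msmul QQ (r * s) X = msmul QQ r (msmul QQ s X)" using f1 f2 q_smul a by simp
    have g: "msmul (rowmod p) 1 a = a" by (subst (2) rfun[OF a(1)]) (simp add: rsmul fun_eq_iff)
    show "msmul QQ 1 X = X" using g q_smul a by simp
  next
    fix r X Y assume "X \<in> mcar QQ" "Y \<in> mcar QQ"
    then obtain a b where h: "a \<in> RR p" "b \<in> RR p" "X = cs a" "Y = cs b" using ex by metis
    have ra: "msmul (rowmod p) r a \<in> RR p" "msmul (rowmod p) r b \<in> RR p" "madd (rowmod p) a b \<in> RR p"
      by (simp_all add: rsmul radd)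
    have e1: "msmul QQ r (madd QQ X Y) = cs (msmul (rowmod p) r (madd (rowmod p) a b))"
      using q_add q_smul h ra by simp
    have e2: "madd QQ (msmul QQ r X) (msmul QQ r Y) = cs (madd (rowmod p) (msmul (rowmod p) r a) (msmul (rowmod p) r b))"
      using q_add[OF ra(1,2)] q_smul h by simp
    have e3: "msmul (rowmod p) r (madd (rowmod p) a b) = madd (rowmod p) (msmul (rowmod p) r a) (msmul (rowmod p) r b)"
      by (simp add: rsmul radd fun_eq_iff algebra_simps)
    show "msmul QQ r (madd QQ X Y) = madd QQ (msmul QQ r X) (msmul QQ r Y)" using e1 e2 e3 by simp
  qed
qed

end

lemma fp_quot:
  fixes A :: "nat \<Rightarrow> nat \<Rightarrow> 'r::ring_1"
  shows "fp (quotmod (rowmod p) {vecmat y A q p | y. y \<in> RR q})"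
proof -
  let ?W = "{vecmat y A q p | y. y \<in> RR q}"
  note W = rsubm_rsp[of p A q]
  have "lker (rowmod p) (quotmod (rowmod p) ?W) (coset (rowmod p) ?W) = {x \<in> RR p. coset (rowmod p) ?W x = ?W}"
    unfolding lker_def q_zero[OF W] ..
  also have "\<dots> = ?W"
  proof (intro equalityI subsetI)
    fix x assume "x \<in> {x \<in> RR p. coset (rowmod p) ?W x = ?W}"
    thus "x \<in> ?W" using cs_eq_W[OF W] by blast
  next
    fix x assume "x \<in> ?W"
    thus "x \<in> {x \<in> RR p. coset (rowmod p) ?W x = ?W}" using cs_W[OF W] W_RR[OF W] by blast
  qed
  finally have "lker (rowmod p) (quotmod (rowmod p) ?W) (coset (rowmod p) ?W) = ?W" .
  moreover have "coset (rowmod p) ?W ` RR p = mcar (quotmod (rowmod p) ?W)" using q_car[OF W] by simp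
  ultimately show ?thesis unfolding fp_def using lmodule_QQ[OF W] hom_cs[OF W] by blast
qed



lemma sum_split_nat: fixes k :: nat shows "(\<Sum>i<q+k. g i) = (\<Sum>i<q. g i) + (\<Sum>j<k. (g (q+j)::'a::comm_monoid_add))"
  by (induction k) (simp_all add: add.assoc)

lemma cs_add_W:
  assumes W: "rsubm p W" and a: "a \<in> RR p" and w: "w \<in> W"
  shows "coset (rowmod p) W (madd (rowmod p) a w) = coset (rowmod p) W a"
proof -
  have "coset (rowmod p) W (madd (rowmod p) a w) = madd (quotmod (rowmod p) W) (coset (rowmod p) W a) (coset (rowmod p) W w)"
    using q_add[OF W a W_RR[OF W w]] by simp
  also have "\<dots> = madd (quotmod (rowmod p) W) (coset (rowmod p) W a) (mzero (quotmod (rowmod p) W))"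
    using cs_W[OF W w] q_zero[OF W] by simp
  also have "\<dots> = coset (rowmod p) W a"
    using lm_rzero[OF lmodule_QQ[OF W]] q_car[OF W] a by simp
  finally show ?thesis .
qed

definition pushmap :: "((nat \<Rightarrow> 'r::ring_1) \<Rightarrow> 'n) \<Rightarrow> nat \<Rightarrow> (nat \<Rightarrow> 'r) set \<Rightarrow> ('r, 'n) lmod \<Rightarrow> 'n \<Rightarrow> (nat \<Rightarrow> 'r) set" where
  "pushmap f p W N = restrict (\<lambda>z. coset (rowmod p) W (SOME a. a \<in> RR p \<and> f a = z)) (mcar N)"

context
  fixes N :: "('r::ring_1, 'n) lmod" and f p W
  assumes N: "lmodule N" and hf: "lhom (rowmod p) N f" and sf: "f ` RR p = mcar N"
    and kf: "lker (rowmod p) N f \<subseteq> W" and W: "rsubm p W"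
begin

lemma diff_ker:
  assumes a: "a \<in> RR p" and b: "b \<in> RR p" and e: "f a = f b"
  shows "\<exists>d\<in>W. b = madd (rowmod p) a d"
proof -
  let ?d = "madd (rowmod p) b (msmul (rowmod p) (-1) a)"
  have dR: "?d \<in> RR p" by (simp add: radd)
  have v: "madd (rowmod p) ?d a = b" by (rule RR_ext[of _ p]) (simp_all add: radd rsmul b)
  have "madd N (f ?d) (f a) = madd N (mzero N) (f a)"
    using hom_add[OF hf dR a] v e lm_lzero[OF N] hom_car[OF hf a] by simp
  hence "f ?d = mzero N" using lm_cancel[OF N hom_car[OF hf dR] lm_zero[OF N] hom_car[OF hf a]] by blast
  hence "?d \<in> W" using kf dR unfolding lker_def by blast
  moreover have "b = madd (rowmod p) a ?d"
    by (rule RR_ext[of _ p]) (simp_all add: radd rsmul b)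
  ultimately show ?thesis by blast
qed

lemma push_val: assumes a: "a \<in> RR p" shows "pushmap f p W N (f a) = coset (rowmod p) W a"
proof -
  have fa: "f a \<in> mcar N" using hom_car[OF hf a] .
  have ex: "\<exists>b. b \<in> RR p \<and> f b = f a" using a by blast
  define b where "b = (SOME b. b \<in> RR p \<and> f b = f a)"
  have b: "b \<in> RR p" "f b = f a" using someI_ex[OF ex] unfolding b_def by blast+
  obtain d where d: "d \<in> W" "a = madd (rowmod p) b d" using diff_ker[OF b(1) a b(2)] by blast
  have "pushmap f p W N (f a) = coset (rowmod p) W b" using fa unfolding pushmap_def b_def by simp
  also have "\<dots> = coset (rowmod p) W a" using cs_add_W[OF W b(1) d(1)] d(2) by simp
  finally show ?thesis .
qed

lemma push_hom: "pushmap f p W N \<in> Hom N (quotmod (rowmod p) W)"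
proof -
  have ex: "\<And>z. z \<in> mcar N \<Longrightarrow> \<exists>a\<in>RR p. z = f a" using sf by auto
  have "lhom N (quotmod (rowmod p) W) (pushmap f p W N)"
    unfolding lhom_def
  proof (intro conjI ballI allI)
    show "pushmap f p W N \<in> mcar N \<rightarrow> mcar (quotmod (rowmod p) W)"
    proof
      fix z assume "z \<in> mcar N"
      then obtain a where "a \<in> RR p" "z = f a" using ex by blast
      thus "pushmap f p W N z \<in> mcar (quotmod (rowmod p) W)" using push_val q_car[OF W] by simp
    qed
  next
    fix x y assume "x \<in> mcar N" "y \<in> mcar N"
    then obtain a b where h: "a \<in> RR p" "x = f a" "b \<in> RR p" "y = f b" using ex by metis
    have ab: "madd (rowmod p) a b \<in> RR p" by (simp add: radd)
    have "madd N x y = f (madd (rowmod p) a b)" using hom_add[OF hf h(1,3)] h by simp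
    thus "pushmap f p W N (madd N x y) = madd (quotmod (rowmod p) W) (pushmap f p W N x) (pushmap f p W N y)"
      using push_val[OF ab] push_val[OF h(1)] push_val[OF h(3)] h q_add[OF W h(1,3)] by simp
  next
    fix r x assume "x \<in> mcar N"
    then obtain a where h: "a \<in> RR p" "x = f a" using ex by metis
    have ab: "msmul (rowmod p) r a \<in> RR p" by (simp add: rsmul)
    have "msmul N r x = f (msmul (rowmod p) r a)" using hom_smul[OF hf h(1)] h by simp
    thus "pushmap f p W N (msmul N r x) = msmul (quotmod (rowmod p) W) r (pushmap f p W N x)"
      using push_val[OF ab] push_val[OF h(1)] h q_smul[OF W h(1)] by simp
  qed
  thus ?thesis unfolding Hom_def pushmap_def by simp
qed

lemma push_bij:
  assumes kW: "W = lker (rowmod p) N f"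
  shows "bij_betw (pushmap f p W N) (mcar N) (mcar (quotmod (rowmod p) W))"
proof -
  have ex: "\<And>z. z \<in> mcar N \<Longrightarrow> \<exists>a\<in>RR p. z = f a" using sf by auto
  have inj: "inj_on (pushmap f p W N) (mcar N)"
  proof
    fix x y assume "x \<in> mcar N" "y \<in> mcar N" and e: "pushmap f p W N x = pushmap f p W N y"
    then obtain a b where h: "a \<in> RR p" "x = f a" "b \<in> RR p" "y = f b" using ex by metis
    have "coset (rowmod p) W a = coset (rowmod p) W b" using e h push_val by simp
    then obtain u where u: "u \<in> W" "a = madd (rowmod p) b u" using cs_eq[OF W h(1,3)] by blast
    have "f u = mzero N" using u(1) kW unfolding lker_def by blast
    hence "f a = f b" using u hom_add[OF hf h(3) W_RR[OF W u(1)]] lm_rzero[OF N hom_car[OF hf h(3)]] by simp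
    thus "x = y" using h by simp
  qed
  have "pushmap f p W N ` mcar N = mcar (quotmod (rowmod p) W)"
    unfolding q_car[OF W] sf[symmetric] image_image using push_val by (auto simp: image_iff)
  thus ?thesis using inj unfolding bij_betw_def by blast
qed

end



locale Setup =
  fixes m k n :: nat and B B' :: "nat \<Rightarrow> nat \<Rightarrow> 'r::ring_1"
    and N :: "('r, 'n) lmod" and N' :: "('r, 'n2) lmod" and \<alpha> :: "'n \<Rightarrow> 'n2"
    and \<eta> :: "('r, 'r univ) lmod \<Rightarrow> ('n \<Rightarrow> 'r univ) \<Rightarrow> nat \<Rightarrow> 'r univ"
    and p q :: nat and A :: "nat \<Rightarrow> nat \<Rightarrow> 'r" and f :: "(nat \<Rightarrow> 'r) \<Rightarrow> 'n"
    and p' q' :: nat and A' :: "nat \<Rightarrow> nat \<Rightarrow> 'r" and f' :: "(nat \<Rightarrow> 'r) \<Rightarrow> 'n2"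
  assumes kn: "k \<le> n"
    and pres: "is_presentation m k n B B' N N' \<alpha> \<eta>"
    and hf: "lhom (rowmod p) N f" and sf: "f ` RR p = mcar N"
    and kf: "lker (rowmod p) N f = {vecmat y A q p | y. y \<in> RR q}"
    and hf': "lhom (rowmod p') N' f'" and sf': "f' ` RR p' = mcar N'"
    and kf': "lker (rowmod p') N' f' = {vecmat y A' q' p' | y. y \<in> RR q'}"

context Setup
begin

abbreviation "K0 \<equiv> {vecmat y A q p | y. y \<in> RR q}"
abbreviation "K0' \<equiv> {vecmat y A' q' p' | y. y \<in> RR q'}"
abbreviation "Nt \<equiv> quotmod (rowmod p) K0"
abbreviation "Nt' \<equiv> quotmod (rowmod p') K0'"
abbreviation "\<theta> \<equiv> pushmap f p K0 N"
abbreviation "\<theta>' \<equiv> pushmap f' p' K0' N'"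

lemma PP: "fp N \<and> fp N' \<and> \<alpha> \<in> Hom N N' \<and>
     (\<forall>M::('r, 'r univ) lmod. fp M \<longrightarrow>
        (\<forall>f\<in>Hom N M. \<eta> M f \<in> ppB m k n B B' M) \<and>
        (\<forall>f\<in>Hom N M. \<forall>g\<in>Hom N M.
           \<eta> M (restrict (\<lambda>x. madd M (f x) (g x)) (mcar N))
             = restrict (\<lambda>j. madd M (\<eta> M f j) (\<eta> M g j)) {..<k}) \<and>
        \<eta> M ` Hom N M = ppB m k n B B' M \<and>
        {compose (mcar N) h \<alpha> | h. h \<in> Hom N' M}
          = {f \<in> Hom N M. \<eta> M f = restrict (\<lambda>_. mzero M) {..<k}}) \<and>
     (\<forall>(M::('r, 'r univ) lmod) (M'::('r, 'r univ) lmod). fp M \<and> fp M' \<longrightarrow>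
        (\<forall>g\<in>Hom M M'. \<forall>f\<in>Hom N M.
           \<eta> M' (compose (mcar N) g f) = restrict (\<lambda>j. g (\<eta> M f j)) {..<k}))"
  using pres unfolding is_presentation_def .

lemma fpN: "fp N" using PP by (rule conjunct1)
lemma fpN': "fp N'" using PP by (elim conjE)
lemma alpha: "\<alpha> \<in> Hom N N'" using PP by (elim conjE)

lemma P2a: "fp M \<Longrightarrow> g \<in> Hom N M \<Longrightarrow> \<eta> M g \<in> ppB m k n B B' M"
  using PP by (elim conjE) (drule spec[of _ M], elim impE conjE, assumption, blast)
lemma P2b: "fp M \<Longrightarrow> \<eta> M ` Hom N M = ppB m k n B B' M"
  using PP by (elim conjE) (drule spec[of _ M], elim impE conjE, assumption, assumption)
lemma P2c: "fp M \<Longrightarrow> {compose (mcar N) h \<alpha> | h. h \<in> Hom N' M}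
          = {f \<in> Hom N M. \<eta> M f = restrict (\<lambda>_. mzero M) {..<k}}"
  using PP by (elim conjE) (drule spec[of _ M], elim impE conjE, assumption, assumption)

lemma P3: "fp M \<Longrightarrow> fp M' \<Longrightarrow> g \<in> Hom M M' \<Longrightarrow> h \<in> Hom N M \<Longrightarrow>
   \<eta> M' (compose (mcar N) g h) = restrict (\<lambda>j. g (\<eta> M h j)) {..<k}"
  using PP by (elim conjE) (drule spec[of _ M], drule spec[of _ M'], elim impE conjE, blast, blast)

lemma lmN: "lmodule N" using fpN fp_def by blast
lemma lmN': "lmodule N'" using fpN' fp_def by blast
lemma K0s: "rsubm p K0" by (rule rsubm_rsp)
lemma K0s': "rsubm p' K0'" by (rule rsubm_rsp)
lemma fpNt: "fp Nt" by (rule fp_quot)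
lemma fpNt': "fp Nt'" by (rule fp_quot)

lemma th_hom: "\<theta> \<in> Hom N Nt"
  by (rule push_hom[OF lmN hf sf _ K0s]) (simp add: kf)
lemma th_bij: "bij_betw \<theta> (mcar N) (mcar Nt)"
  by (rule push_bij[OF lmN hf sf _ K0s]) (simp_all add: kf)
lemma th_val: "a \<in> RR p \<Longrightarrow> \<theta> (f a) = coset (rowmod p) K0 a"
  by (rule push_val[OF lmN hf sf _ K0s]) (simp_all add: kf)
lemma th_hom': "\<theta>' \<in> Hom N' Nt'"
  by (rule push_hom[OF lmN' hf' sf' _ K0s']) (simp add: kf')
lemma th_bij': "bij_betw \<theta>' (mcar N') (mcar Nt')"
  by (rule push_bij[OF lmN' hf' sf' _ K0s']) (simp_all add: kf')

definition "\<xi> = \<eta> Nt \<theta>"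

lemma xi_pp: "\<xi> \<in> ppB m k n B B' Nt"
  using P2a[OF fpNt th_hom] unfolding \<xi>_def .

definition "aa j = (SOME b. b \<in> RR p \<and> \<xi> j = coset (rowmod p) K0 b)"

lemma aa: assumes "j < k" shows "aa j \<in> RR p" "\<xi> j = coset (rowmod p) K0 (aa j)"
proof -
  have "\<xi> j \<in> mcar Nt" using xi_pp assms unfolding ppB_def by auto
  hence ex: "\<exists>b. b \<in> RR p \<and> \<xi> j = coset (rowmod p) K0 b" using q_car[OF K0s] by auto
  show "aa j \<in> RR p" "\<xi> j = coset (rowmod p) K0 (aa j)" using someI_ex[OF ex] unfolding aa_def by blast+
qed

definition "nn j = f (aa j)"

lemma nn_car: "j < k \<Longrightarrow> nn j \<in> mcar N" using hom_car[OF hf aa(1)] nn_def by simp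
lemma th_nn: "j < k \<Longrightarrow> \<theta> (nn j) = \<xi> j" using th_val aa nn_def by simp

lemma eta_formula:
  assumes M: "fp M" and g: "g \<in> Hom N M"
  shows "\<eta> M g = restrict (\<lambda>j. g (nn j)) {..<k}"
proof -
  let ?ti = "inv_into (mcar N) \<theta>"
  let ?G = "restrict (\<lambda>X. g (?ti X)) (mcar Nt)"
  have thh: "lhom N Nt \<theta>" using th_hom Hom_def by blast
  have gh: "lhom N M g" "g \<in> extensional (mcar N)" using g Hom_def by blast+
  have tih: "lhom Nt N ?ti" by (rule hom_inv[OF lmN thh th_bij])
  have gti: "lhom Nt M (\<lambda>X. g (?ti X))" by (rule hom_comp[OF tih gh(1)])
  note LQ = lmodule_QQ[OF K0s]
  have Gl: "lhom Nt M ?G"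
    unfolding lhom_def
  proof (intro conjI ballI allI)
    show "?G \<in> mcar Nt \<rightarrow> mcar M" using hom_car[OF gti] by simp
    fix X Y assume "X \<in> mcar Nt" "Y \<in> mcar Nt"
    thus "?G (madd Nt X Y) = madd M (?G X) (?G Y)" using hom_add[OF gti] lm_add[OF LQ] by simp
  next
    fix r X assume "X \<in> mcar Nt"
    thus "?G (msmul Nt r X) = msmul M r (?G X)" using hom_smul[OF gti] lm_smul[OF LQ] by simp
  qed
  have G: "?G \<in> Hom Nt M" using Gl unfolding Hom_def by simp
  have ti: "\<And>z. z \<in> mcar N \<Longrightarrow> ?ti (\<theta> z) = z" using th_bij by (simp add: bij_betw_imp_inj_on)
  have comp: "compose (mcar N) ?G \<theta> = g"
  proof (rule extensionalityI[of _ "mcar N"])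
    show "compose (mcar N) ?G \<theta> \<in> extensional (mcar N)" by (simp add: compose_def)
    show "g \<in> extensional (mcar N)" by (rule gh(2))
    fix z assume z: "z \<in> mcar N"
    have "\<theta> z \<in> mcar Nt" using hom_car[OF thh z] .
    thus "compose (mcar N) ?G \<theta> z = g z" using z ti by (simp add: compose_def)
  qed
  have "\<eta> M g = restrict (\<lambda>j. ?G (\<xi> j)) {..<k}"
    using P3[OF fpNt M G th_hom] comp unfolding \<xi>_def by simp
  also have "\<dots> = restrict (\<lambda>j. g (nn j)) {..<k}"
  proof (rule restrict_ext)
    fix j assume "j \<in> {..<k}"
    hence j: "j < k" by simp
    have "\<xi> j \<in> mcar Nt" using th_nn[OF j] hom_car[OF thh nn_car[OF j]] by simp
    thus "?G (\<xi> j) = g (nn j)" using th_nn[OF j, symmetric] ti[OF nn_car[OF j]] by simp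
  qed
  finally show ?thesis .
qed

end



lemma vecmat_restrict: "vecmat (restrict y {..<q}) A q p = vecmat y A q p"
  unfolding vecmat_def by (rule restrict_ext) (rule sum.cong, auto)

lemma delta_sum: fixes t s :: nat shows "(\<Sum>j<t. g j * (if s = j then 1 else (0::'a::ring_1))) = (if s < t then g s else 0)"
proof -
  have "(\<Sum>j<t. g j * (if s = j then 1 else (0::'a))) = (\<Sum>j\<in>{..<t}. if j = s then g j else 0)"
    by (rule sum.cong) auto
  also have "\<dots> = (if s < t then g s else 0)" by (subst sum.delta) auto
  finally show ?thesis .
qed
lemma delta_sum_left: fixes t s :: nat shows "(\<Sum>j<t. (if j = s then 1 else (0::'a::ring_1)) * g j) = (if s < t then g s else 0)"
proof -
  have "(\<Sum>j<t. (if j = s then 1 else (0::'a)) * g j) = (\<Sum>j\<in>{..<t}. if j = s then g j else 0)"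
    by (rule sum.cong) auto
  also have "\<dots> = (if s < t then g s else 0)" by (subst sum.delta) auto
  finally show ?thesis .
qed

context Setup
begin

lemma nn_ker: assumes j: "j < k" shows "\<alpha> (nn j) = mzero N'"
proof -
  let ?c = "compose (mcar N) \<theta>' \<alpha>"
  have "?c \<in> {compose (mcar N) h \<alpha> | h. h \<in> Hom N' Nt'}" using th_hom' by blast
  hence c: "?c \<in> Hom N Nt'" "\<eta> Nt' ?c = restrict (\<lambda>_. mzero Nt') {..<k}"
    using P2c[OF fpNt'] by blast+
  have "\<eta> Nt' ?c = restrict (\<lambda>j. ?c (nn j)) {..<k}" by (rule eta_formula[OF fpNt' c(1)])
  hence eqR: "restrict (\<lambda>j. ?c (nn j)) {..<k} = restrict (\<lambda>_. mzero Nt') {..<k}" using c(2) by simp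
  have "restrict (\<lambda>j. ?c (nn j)) {..<k} j = restrict (\<lambda>_. mzero Nt') {..<k} j" using eqR by (rule fun_cong)
  hence "?c (nn j) = mzero Nt'" using j by simp
  hence e1: "\<theta>' (\<alpha> (nn j)) = mzero Nt'" using compose_eq[OF nn_car[OF j], where g="\<theta>'" and f=\<alpha>] by simp
  have th'l: "lhom N' Nt' \<theta>'" using th_hom' Hom_def by blast
  have e2: "\<theta>' (mzero N') = mzero Nt'" by (rule hom_zero[OF lmN' lmodule_QQ[OF K0s'] th'l])
  have al: "lhom N N' \<alpha>" using alpha Hom_def by blast
  have inj: "inj_on \<theta>' (mcar N')" using th_bij' bij_betw_def by blast
  show ?thesis using inj_onD[OF inj, of "\<alpha> (nn j)" "mzero N'"] e1 e2 hom_car[OF al nn_car[OF j]] lm_zero[OF lmN']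
    by simp
qed

definition "Psi x = f (vecmat x aa k p)"

lemma psi_car: "Psi x \<in> mcar N" unfolding Psi_def by (rule hom_car[OF hf vecmat_RR])

lemma psi_add: "Psi (madd (rowmod k) x y) = madd N (Psi x) (Psi y)"
  unfolding Psi_def vecmat_add[symmetric] by (rule hom_add[OF hf vecmat_RR vecmat_RR])

lemma psi_smul: "Psi (msmul (rowmod k) r x) = msmul N r (Psi x)"
  unfolding Psi_def vecmat_smul[symmetric] by (rule hom_smul[OF hf vecmat_RR])

lemma psi_lin: "Psi x = msum N (\<lambda>j. msmul N (x j) (nn j)) k"
  unfolding Psi_def nn_def by (rule hom_vecmat[OF hf lmN aa(1)])

lemma psi_K: "\<alpha> (Psi x) = mzero N'"
proof -
  have al: "lhom N N' \<alpha>" using alpha Hom_def by blast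
  have "\<alpha> (Psi x) = msum N' (\<lambda>j. \<alpha> (msmul N (x j) (nn j))) k"
    unfolding psi_lin by (rule hom_msum[OF al lmN lmN']) (rule lm_smul[OF lmN nn_car])
  also have "\<dots> = mzero N'"
  proof (rule msum_zero[OF lmN'])
    fix j assume j: "j < k"
    show "\<alpha> (msmul N (x j) (nn j)) = mzero N'"
      using hom_smul[OF al nn_car[OF j]] nn_ker[OF j] lm_smul_zero[OF lmN'] by simp
  qed
  finally show ?thesis .
qed

lemma psi_lker: "Psi x \<in> lker N N' \<alpha>"
  unfolding lker_def using psi_car psi_K by blast

definition "Ac i = (if i < q then A i else aa (i - q))"
abbreviation "Wc \<equiv> {vecmat y Ac (q+k) p | y. y \<in> RR (q+k)}"

lemma vecmat_split: "vecmat y Ac (q+k) p = madd (rowmod p) (vecmat y A q p) (vecmat (\<lambda>j. y (q+j)) aa k p)"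
  unfolding vecmat_def radd by (rule restrict_ext) (simp add: sum_split_nat Ac_def)

lemma K0_Wc: "vecmat y A q p \<in> Wc"
proof -
  let ?y = "restrict (\<lambda>i. if i < q then y i else 0) {..<q+k}"
  have "vecmat ?y Ac (q+k) p = vecmat (\<lambda>i. if i < q then y i else 0) Ac (q+k) p"
    by (rule vecmat_restrict)
  also have "\<dots> = vecmat y A q p"
    unfolding vecmat_split radd by (rule RR_ext[of _ p]) (simp_all add: vecmat_def)
  finally have e: "vecmat ?y Ac (q+k) p = vecmat y A q p" .
  show ?thesis by (rule CollectI, rule exI[of _ ?y], rule conjI, rule e[symmetric]) simp
qed

lemma aa_Wc: assumes j: "j < k" shows "aa j \<in> Wc"
proof -
  let ?y = "restrict (\<lambda>i. if i = q + j then 1 else 0) {..<q+k}"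
  have "vecmat ?y Ac (q+k) p = vecmat (\<lambda>i. if i = q + j then 1 else 0) Ac (q+k) p"
    by (rule vecmat_restrict)
  also have "\<dots> = aa j"
  proof (rule RR_ext[of _ p])
    show "aa j \<in> RR p" using aa(1)[OF j] .
    fix s assume s: "s < p"
    show "vecmat (\<lambda>i. if i = q + j then 1 else 0) Ac (q + k) p s = aa j s"
      using j s by (simp add: vecmat_def delta_sum_left Ac_def)
  qed simp
  finally have e: "vecmat ?y Ac (q+k) p = aa j" .
  show ?thesis by (rule CollectI, rule exI[of _ ?y], rule conjI, rule e[symmetric]) simp
qed

lemma psi_onto: assumes z: "z \<in> lker N N' \<alpha>" shows "\<exists>x\<in>RR k. Psi x = z"
proof -
  note Ws = rsubm_rsp[of p Ac "q+k"]
  let ?Q = "quotmod (rowmod p) Wc"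
  let ?\<pi> = "pushmap f p Wc N"
  have kW: "lker (rowmod p) N f \<subseteq> Wc" using K0_Wc kf by auto
  have ph: "?\<pi> \<in> Hom N ?Q" by (rule push_hom[OF lmN hf sf kW Ws])
  have pv: "\<And>a. a \<in> RR p \<Longrightarrow> ?\<pi> (f a) = coset (rowmod p) Wc a" by (rule push_val[OF lmN hf sf kW Ws])
  have fpQ: "fp ?Q" by (rule fp_quot)
  have "\<eta> ?Q ?\<pi> = restrict (\<lambda>j. ?\<pi> (nn j)) {..<k}" by (rule eta_formula[OF fpQ ph])
  also have "\<dots> = restrict (\<lambda>_. mzero ?Q) {..<k}"
  proof (rule restrict_ext)
    fix j assume "j \<in> {..<k}"
    hence j: "j < k" by simp
    show "?\<pi> (nn j) = mzero ?Q" unfolding nn_def pv[OF aa(1)[OF j]] q_zero[OF Ws]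
      by (rule cs_W[OF Ws aa_Wc[OF j]])
  qed
  finally have "?\<pi> \<in> {g \<in> Hom N ?Q. \<eta> ?Q g = restrict (\<lambda>_. mzero ?Q) {..<k}}" using ph by blast
  then obtain h where h: "h \<in> Hom N' ?Q" "?\<pi> = compose (mcar N) h \<alpha>" using P2c[OF fpQ] by blast
  have zN: "z \<in> mcar N" and az: "\<alpha> z = mzero N'" using z unfolding lker_def by auto
  obtain b where b: "b \<in> RR p" "z = f b" using zN sf by auto
  have hl: "lhom N' ?Q h" using h(1) Hom_def by blast
  have "coset (rowmod p) Wc b = ?\<pi> z" using pv b by simp
  also have "\<dots> = h (\<alpha> z)" using h(2) zN by (simp add: compose_def)
  also have "\<dots> = mzero ?Q" using az hom_zero[OF lmN' lmodule_QQ[OF Ws] hl] by simp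
  also have "\<dots> = Wc" by (rule q_zero[OF Ws])
  finally have "b \<in> Wc" using cs_eq_W[OF Ws b(1)] by simp
  then obtain y where y: "b = vecmat y Ac (q+k) p" by blast
  let ?y2 = "restrict (\<lambda>j. y (q+j)) {..<k}"
  have "vecmat (restrict y {..<q}) A q p \<in> lker (rowmod p) N f"
    unfolding kf by (rule CollectI, rule exI[of _ "restrict y {..<q}"]) simp
  hence "f (vecmat y A q p) = mzero N" unfolding lker_def vecmat_restrict by blast
  hence "f b = madd N (mzero N) (Psi ?y2)"
    unfolding y vecmat_split Psi_def vecmat_restrict by (simp add: hom_add[OF hf vecmat_RR vecmat_RR])
  hence "z = Psi ?y2" using b(2) lm_lzero[OF lmN psi_car] by simp
  thus ?thesis by (intro bexI[of _ ?y2]) simp_all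
qed

end



lemma delta_sum_shift: fixes t s k :: nat
  shows "(\<Sum>l<t. g l * (if s = k + l then 1 else (0::'a::ring_1))) = (if k \<le> s \<and> s - k < t then g (s - k) else 0)"
proof (cases "k \<le> s")
  case True
  have "(\<Sum>l<t. g l * (if s = k + l then 1 else (0::'a))) = (\<Sum>l<t. g l * (if s - k = l then 1 else 0))"
    by (rule sum.cong) (use True in auto)
  thus ?thesis using True by (simp add: delta_sum)
next
  case False
  thus ?thesis by (simp add: sum.neutral)
qed

context Setup
begin

definition "Cm i j = (if j < k then B i j else B' i (j - k))"
abbreviation "WL \<equiv> {vecmat y Cm m n | y. y \<in> RR m}"
abbreviation "LL \<equiv> quotmod (rowmod n) WL"
definition "ee j = restrict (\<lambda>s. if s = j then (1::'r) else 0) {..<n}"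

lemma WLs: "rsubm n WL" by (rule rsubm_rsp)
lemma ee_RR: "ee j \<in> RR n" unfolding ee_def by simp

lemma vecmat_ee: "s < n \<Longrightarrow> vecmat x ee t n s = (if s < t then x s else 0)"
  by (simp add: vecmat_def ee_def delta_sum)

lemma vecmat_ee2: "s < n \<Longrightarrow> vecmat x (\<lambda>l. ee (k + l)) t n s = (if k \<le> s \<and> s - k < t then x (s - k) else 0)"
  by (simp add: vecmat_def ee_def delta_sum_shift)

lemma omega_pp: "restrict (\<lambda>j. coset (rowmod n) WL (ee j)) {..<k} \<in> ppB m k n B B' LL"
proof -
  let ?w = "restrict (\<lambda>j. coset (rowmod n) WL (ee j)) {..<k}"
  let ?w' = "restrict (\<lambda>l. coset (rowmod n) WL (ee (k + l))) {..<n-k}"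
  note hm = hom_cs[OF WLs] and LQ = lmodule_QQ[OF WLs]
  have c1: "?w \<in> {..<k} \<rightarrow>\<^sub>E mcar LL" using ee_RR q_car[OF WLs] by (auto simp: restrict_PiE_iff)
  have c2: "?w' \<in> {..<n-k} \<rightarrow>\<^sub>E mcar LL" using ee_RR q_car[OF WLs] by (auto simp: restrict_PiE_iff)
  have eq: "madd LL (msum LL (\<lambda>j. msmul LL (B i j) (?w j)) k)
                   (msum LL (\<lambda>j. msmul LL (B' i j) (?w' j)) (n-k)) = mzero LL" if i: "i < m" for i
  proof -
    have s1: "msum LL (\<lambda>j. msmul LL (B i j) (?w j)) k = coset (rowmod n) WL (vecmat (B i) ee k n)"
    proof -
      have "msum LL (\<lambda>j. msmul LL (B i j) (?w j)) k = msum LL (\<lambda>j. msmul LL (B i j) (coset (rowmod n) WL (ee j))) k"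
        by (rule msum_cong) simp
      also have "\<dots> = coset (rowmod n) WL (vecmat (B i) ee k n)"
        by (rule hom_vecmat[OF hm LQ ee_RR, symmetric])
      finally show ?thesis .
    qed
    have s2: "msum LL (\<lambda>j. msmul LL (B' i j) (?w' j)) (n-k) = coset (rowmod n) WL (vecmat (B' i) (\<lambda>l. ee (k + l)) (n-k) n)"
    proof -
      have "msum LL (\<lambda>j. msmul LL (B' i j) (?w' j)) (n-k) = msum LL (\<lambda>j. msmul LL (B' i j) (coset (rowmod n) WL (ee (k+j)))) (n-k)"
        by (rule msum_cong) simp
      also have "\<dots> = coset (rowmod n) WL (vecmat (B' i) (\<lambda>l. ee (k + l)) (n-k) n)"
        by (rule hom_vecmat[OF hm LQ ee_RR, symmetric])
      finally show ?thesis .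
    qed
    let ?d = "restrict (\<lambda>i'. if i' = i then (1::'r) else 0) {..<m}"
    have v: "madd (rowmod n) (vecmat (B i) ee k n) (vecmat (B' i) (\<lambda>l. ee (k + l)) (n-k) n) = vecmat ?d Cm m n"
    proof (rule RR_ext[of _ n])
      fix s assume s: "s < n"
      have r: "vecmat ?d Cm m n s = Cm i s"
        unfolding vecmat_restrict[of "\<lambda>i'. if i' = i then (1::'r) else 0" m Cm n, symmetric]
        using s i by (simp add: vecmat_def delta_sum_left)
      show "madd (rowmod n) (vecmat (B i) ee k n) (vecmat (B' i) (\<lambda>l. ee (k + l)) (n-k) n) s = vecmat ?d Cm m n s"
        unfolding r using s kn by (auto simp: radd vecmat_ee vecmat_ee2 Cm_def)
    qed (simp_all add: radd)
    have "madd LL (msum LL (\<lambda>j. msmul LL (B i j) (?w j)) k)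
                   (msum LL (\<lambda>j. msmul LL (B' i j) (?w' j)) (n-k)) = coset (rowmod n) WL (vecmat ?d Cm m n)"
      unfolding s1 s2 q_add[OF WLs vecmat_RR vecmat_RR] v ..
    also have "\<dots> = WL" by (rule cs_W[OF WLs]) force
    also have "\<dots> = mzero LL" by (rule q_zero[OF WLs, symmetric])
    finally show ?thesis .
  qed
  show ?thesis unfolding ppB_def using c1 c2 eq by blast
qed

abbreviation "UU \<equiv> {vecmat y B m k | y. y \<in> RR m \<and> vecmat y B' m (n - k) = mzero (rowmod (n - k))}"

lemma psi_zero_U:
  assumes x: "x \<in> RR k" and z: "Psi x = mzero N"
  shows "x \<in> UU"
proof -
  note hm = hom_cs[OF WLs] and LQ = lmodule_QQ[OF WLs]
  have fpL: "fp LL" by (rule fp_quot)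
  obtain g where g: "g \<in> Hom N LL" "\<eta> LL g = restrict (\<lambda>j. coset (rowmod n) WL (ee j)) {..<k}"
    using omega_pp P2b[OF fpL] by (metis (no_types, lifting) imageE)
  have gl: "lhom N LL g" using g(1) Hom_def by blast
  have gn: "g (nn j) = coset (rowmod n) WL (ee j)" if j: "j < k" for j
  proof -
    have "restrict (\<lambda>j. g (nn j)) {..<k} = restrict (\<lambda>j. coset (rowmod n) WL (ee j)) {..<k}"
      using g(2) eta_formula[OF fpL g(1)] by simp
    hence "restrict (\<lambda>j. g (nn j)) {..<k} j = restrict (\<lambda>j. coset (rowmod n) WL (ee j)) {..<k} j" by (rule fun_cong)
    thus ?thesis using j by simp
  qed
  have "g (Psi x) = msum LL (\<lambda>j. g (msmul N (x j) (nn j))) k"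
    unfolding psi_lin by (rule hom_msum[OF gl lmN LQ]) (rule lm_smul[OF lmN nn_car])
  also have "\<dots> = msum LL (\<lambda>j. msmul LL (x j) (coset (rowmod n) WL (ee j))) k"
    by (rule msum_cong) (simp add: hom_smul[OF gl nn_car] gn)
  also have "\<dots> = coset (rowmod n) WL (vecmat x ee k n)"
    by (rule hom_vecmat[OF hm LQ ee_RR, symmetric])
  finally have "coset (rowmod n) WL (vecmat x ee k n) = WL"
    using z hom_zero[OF lmN LQ gl] q_zero[OF WLs] by simp
  hence "vecmat x ee k n \<in> WL" by (rule cs_eq_W[OF WLs vecmat_RR])
  then obtain y where y: "y \<in> RR m" "vecmat x ee k n = vecmat y Cm m n" by blast
  have comp: "vecmat y Cm m n s = (if s < k then x s else 0)" if s: "s < n" for s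
    using y(2)[symmetric] vecmat_ee[OF s] by simp
  have "x = vecmat y B m k"
  proof (rule RR_ext[OF x vecmat_RR])
    fix s assume s: "s < k"
    have "vecmat y Cm m n s = (\<Sum>i<m. y i * B i s)"
      using s kn by (simp add: vecmat_def Cm_def)
    thus "x s = vecmat y B m k s" using comp[of s] s kn by (simp add: vecmat_def)
  qed
  moreover have "vecmat y B' m (n - k) = mzero (rowmod (n - k))"
  proof (rule RR_ext[OF vecmat_RR])
    show "mzero (rowmod (n - k)) \<in> RR (n - k)" by (rule lm_zero[OF lmodule_rowmod])
    fix l assume l: "l < n - k"
    have kl: "k + l < n" using l by arith
    have "(\<Sum>i<m. y i * B' i l) = vecmat y Cm m n (k + l)"
      using kl by (simp add: vecmat_def Cm_def)
    also have "\<dots> = 0" using comp[OF kl] by simp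
    finally show "vecmat y B' m (n - k) l = mzero (rowmod (n - k)) l" using l by (simp add: vecmat_def rzero)
  qed
  ultimately show ?thesis using y(1) by blast
qed

lemma U_psi_zero:
  assumes y: "y \<in> RR m" and yB': "vecmat y B' m (n - k) = mzero (rowmod (n - k))"
  shows "Psi (vecmat y B m k) = mzero N"
proof -
  note hm = hom_cs[OF K0s] and LQ = lmodule_QQ[OF K0s]
  obtain w' where w': "w' \<in> {..<n-k} \<rightarrow>\<^sub>E mcar Nt"
    and weq: "\<forall>i<m. madd Nt (msum Nt (\<lambda>j. msmul Nt (B i j) (\<xi> j)) k)
                   (msum Nt (\<lambda>j. msmul Nt (B' i j) (w' j)) (n-k)) = mzero Nt"
  proof -
    have "\<exists>w'\<in>{..<n-k} \<rightarrow>\<^sub>E mcar Nt. \<forall>i<m. madd Nt (msum Nt (\<lambda>j. msmul Nt (B i j) (\<xi> j)) k)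
                   (msum Nt (\<lambda>j. msmul Nt (B' i j) (w' j)) (n-k)) = mzero Nt"
      using xi_pp unfolding ppB_def mem_Collect_eq by (rule conjunct2)
    thus ?thesis using that by blast
  qed
  have exb: "\<forall>l<n-k. \<exists>b. b \<in> RR p \<and> w' l = coset (rowmod p) K0 b"
  proof (intro allI impI)
    fix l assume l: "l < n - k"
    have "w' l \<in> mcar Nt" using PiE_mem[OF w'] l by simp
    hence "w' l \<in> coset (rowmod p) K0 ` RR p" using q_car[OF K0s] by simp
    then obtain b where "b \<in> RR p" "w' l = coset (rowmod p) K0 b" by (rule imageE)
    thus "\<exists>b. b \<in> RR p \<and> w' l = coset (rowmod p) K0 b" by blast
  qed
  define bb where "bb l = (SOME b. b \<in> RR p \<and> w' l = coset (rowmod p) K0 b)" for l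
  have bb: "bb l \<in> RR p \<and> w' l = coset (rowmod p) K0 (bb l)" if l: "l < n-k" for l
  proof -
    have "\<exists>b. b \<in> RR p \<and> w' l = coset (rowmod p) K0 b" using exb l by blast
    from someI_ex[OF this] show ?thesis unfolding bb_def .
  qed
  define w where "w i = madd (rowmod p) (vecmat (B i) aa k p) (vecmat (B' i) bb (n-k) p)" for i
  have wK: "w i \<in> K0" if i: "i < m" for i
  proof -
    have s1: "msum Nt (\<lambda>j. msmul Nt (B i j) (\<xi> j)) k = coset (rowmod p) K0 (vecmat (B i) aa k p)"
    proof -
      have "msum Nt (\<lambda>j. msmul Nt (B i j) (\<xi> j)) k = msum Nt (\<lambda>j. msmul Nt (B i j) (coset (rowmod p) K0 (aa j))) k"
        by (rule msum_cong) (simp add: aa(2))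
      also have "\<dots> = coset (rowmod p) K0 (vecmat (B i) aa k p)"
        by (rule hom_vecmat[OF hm LQ aa(1), symmetric])
      finally show ?thesis .
    qed
    have s2: "msum Nt (\<lambda>j. msmul Nt (B' i j) (w' j)) (n-k) = coset (rowmod p) K0 (vecmat (B' i) bb (n-k) p)"
    proof -
      have "msum Nt (\<lambda>j. msmul Nt (B' i j) (w' j)) (n-k) = msum Nt (\<lambda>j. msmul Nt (B' i j) (coset (rowmod p) K0 (bb j))) (n-k)"
        by (rule msum_cong) (simp add: bb)
      also have "\<dots> = coset (rowmod p) K0 (vecmat (B' i) bb (n-k) p)"
        by (rule hom_vecmat[OF hm LQ, symmetric]) (simp add: bb)
      finally show ?thesis .
    qed
    have "coset (rowmod p) K0 (w i) = madd Nt (coset (rowmod p) K0 (vecmat (B i) aa k p)) (coset (rowmod p) K0 (vecmat (B' i) bb (n-k) p))"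
      unfolding w_def by (rule q_add[OF K0s vecmat_RR vecmat_RR, symmetric])
    also have "\<dots> = madd Nt (msum Nt (\<lambda>j. msmul Nt (B i j) (\<xi> j)) k) (msum Nt (\<lambda>j. msmul Nt (B' i j) (w' j)) (n-k))"
      unfolding s1 s2 ..
    also have "\<dots> = mzero Nt" using weq i by blast
    also have "\<dots> = K0" by (rule q_zero[OF K0s])
    finally have "coset (rowmod p) K0 (w i) = K0" .
    moreover have wR: "w i \<in> RR p" by (simp add: w_def radd)
    ultimately show ?thesis using cs_eq_W[OF K0s wR] by blast
  qed
  have hB': "(\<Sum>i<m. y i * B' i l) = 0" if l: "l < n - k" for l
  proof -
    have "vecmat y B' m (n - k) l = mzero (rowmod (n - k)) l" using yB' by simp
    thus ?thesis using l by (simp add: vecmat_def rzero)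
  qed
  have veq: "vecmat (vecmat y B m k) aa k p = vecmat y w m p"
  proof (rule RR_ext[OF vecmat_RR vecmat_RR])
    fix s assume s: "s < p"
    have "vecmat (vecmat y B m k) aa k p s = (\<Sum>j<k. (\<Sum>i<m. y i * B i j) * aa j s)"
      using s by (simp add: vecmat_def)
    also have "\<dots> = (\<Sum>j<k. \<Sum>i<m. y i * (B i j * aa j s))"
      by (simp add: sum_distrib_right mult.assoc)
    also have "\<dots> = (\<Sum>i<m. \<Sum>j<k. y i * (B i j * aa j s))"
      by (rule sum.swap)
    also have "\<dots> = (\<Sum>i<m. \<Sum>j<k. y i * (B i j * aa j s)) + (\<Sum>l<n-k. (\<Sum>i<m. y i * B' i l) * bb l s)"
    proof -
      have "(\<Sum>l<n-k. (\<Sum>i<m. y i * B' i l) * bb l s) = 0" by (rule sum.neutral) (simp add: hB')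
      thus ?thesis by simp
    qed
    also have "(\<Sum>l<n-k. (\<Sum>i<m. y i * B' i l) * bb l s) = (\<Sum>l<n-k. \<Sum>i<m. y i * (B' i l * bb l s))"
      by (simp add: sum_distrib_right mult.assoc)
    also have "\<dots> = (\<Sum>i<m. \<Sum>l<n-k. y i * (B' i l * bb l s))"
      by (rule sum.swap)
    also have "(\<Sum>i<m. \<Sum>j<k. y i * (B i j * aa j s)) + (\<Sum>i<m. \<Sum>l<n-k. y i * (B' i l * bb l s))
        = (\<Sum>i<m. y i * ((\<Sum>j<k. B i j * aa j s) + (\<Sum>l<n-k. B' i l * bb l s)))"
      by (simp add: sum_distrib_left distrib_left sum.distrib)
    also have "\<dots> = vecmat y w m p s"
      using s by (simp add: vecmat_def w_def radd)
    finally show "vecmat (vecmat y B m k) aa k p s = vecmat y w m p s" .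
  qed
  have "Psi (vecmat y B m k) = msum N (\<lambda>i. msmul N (y i) (f (w i))) m"
    unfolding Psi_def veq by (rule hom_vecmat[OF hf lmN]) (simp add: w_def radd)
  also have "\<dots> = mzero N"
  proof (rule msum_zero[OF lmN])
    fix i assume i: "i < m"
    have "w i \<in> lker (rowmod p) N f" using wK[OF i] kf by simp
    hence "f (w i) = mzero N" unfolding lker_def by simp
    thus "msmul N (y i) (f (w i)) = mzero N" using lm_smul_zero[OF lmN] by simp
  qed
  finally show ?thesis .
qed

lemma Us: "rsubm k UU"
  unfolding rsubm_def
proof (intro conjI ballI allI)
  show "UU \<subseteq> RR k" by auto
  show "mzero (rowmod k) \<in> UU"
    using vecmat_zero[of m B k] vecmat_zero[of m B' "n-k"] lm_zero[OF lmodule_rowmod, of m]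
    by (metis (mono_tags, lifting) mem_Collect_eq)
next
  fix x1 x2 assume "x1 \<in> UU" "x2 \<in> UU"
  then obtain y1 y2 where h: "y1 \<in> RR m" "vecmat y1 B' m (n - k) = mzero (rowmod (n - k))" "x1 = vecmat y1 B m k"
     "y2 \<in> RR m" "vecmat y2 B' m (n - k) = mzero (rowmod (n - k))" "x2 = vecmat y2 B m k" by blast
  have "vecmat (madd (rowmod m) y1 y2) B' m (n-k) = madd (rowmod (n-k)) (mzero (rowmod (n - k))) (mzero (rowmod (n - k)))"
    using vecmat_add[of "n-k" y1 B' m y2] h by simp
  also have "\<dots> = mzero (rowmod (n - k))" using lm_lzero[OF lmodule_rowmod lm_zero[OF lmodule_rowmod]] .
  finally have e: "vecmat (madd (rowmod m) y1 y2) B' m (n-k) = mzero (rowmod (n - k))" .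
  have "madd (rowmod k) x1 x2 = vecmat (madd (rowmod m) y1 y2) B m k" using h vecmat_add by simp
  moreover have "madd (rowmod m) y1 y2 \<in> RR m" by (simp add: radd)
  ultimately show "madd (rowmod k) x1 x2 \<in> UU" using e by blast
next
  fix r x assume "x \<in> UU"
  then obtain y where h: "y \<in> RR m" "vecmat y B' m (n - k) = mzero (rowmod (n - k))" "x = vecmat y B m k" by blast
  have e: "vecmat (msmul (rowmod m) r y) B' m (n-k) = mzero (rowmod (n - k))"
    using vecmat_smul[of "n-k" r y B' m] h lm_smul_zero[OF lmodule_rowmod] by metis
  have "msmul (rowmod k) r x = vecmat (msmul (rowmod m) r y) B m k" using h vecmat_smul by simp
  moreover have "msmul (rowmod m) r y \<in> RR m" by (simp add: rsmul)
  ultimately show "msmul (rowmod k) r x \<in> UU" using e by blast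
qed

lemma psi_zero_iff: assumes x: "x \<in> RR k" shows "Psi x = mzero N \<longleftrightarrow> x \<in> UU"
  using psi_zero_U[OF x] U_psi_zero by blast

lemma Fcoset: assumes x0: "x0 \<in> RR k"
  shows "{x \<in> RR k. Psi x = Psi x0} = coset (rowmod k) UU x0"
proof (intro equalityI subsetI)
  fix x assume "x \<in> {x \<in> RR k. Psi x = Psi x0}"
  hence x: "x \<in> RR k" "Psi x = Psi x0" by auto
  let ?u = "madd (rowmod k) x (msmul (rowmod k) (-1) x0)"
  have uR: "?u \<in> RR k" by (simp add: radd)
  have v: "madd (rowmod k) ?u x0 = x"
    by (rule RR_ext[of _ k]) (simp_all add: radd rsmul x)
  have "madd N (Psi ?u) (Psi x0) = madd N (mzero N) (Psi x0)"
    using psi_add[of ?u x0] v x(2) lm_lzero[OF lmN psi_car] by simp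
  hence "Psi ?u = mzero N" using lm_cancel[OF lmN psi_car lm_zero[OF lmN] psi_car] by blast
  hence "?u \<in> UU" using psi_zero_iff[OF uR] by blast
  moreover have "x = madd (rowmod k) x0 ?u"
    by (rule RR_ext[of _ k]) (simp_all add: radd rsmul x)
  ultimately show "x \<in> coset (rowmod k) UU x0" unfolding coset_def by blast
next
  fix x assume "x \<in> coset (rowmod k) UU x0"
  then obtain u where u: "u \<in> UU" "x = madd (rowmod k) x0 u" unfolding coset_def by blast
  have uR: "u \<in> RR k" using u(1) by auto
  have "Psi x = madd N (Psi x0) (mzero N)" using psi_add u(2) psi_zero_iff[OF uR] u(1) by simp
  hence "Psi x = Psi x0" using lm_rzero[OF lmN psi_car] by simp
  moreover have "x \<in> RR k" using u(2) by (simp add: radd)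
  ultimately show "x \<in> {x \<in> RR k. Psi x = Psi x0}" by blast
qed

lemma K_eq: "lker N N' \<alpha> = Psi ` RR k"
  using psi_lker psi_onto by blast

lemma main_iso: "liso (submod N (lker N N' \<alpha>)) (quotmod (rowmod k) UU)"
proof -
  define F where "F z = {x \<in> RR k. Psi x = z}" for z
  have Fc: "F (Psi x) = coset (rowmod k) UU x" if "x \<in> RR k" for x
    unfolding F_def by (rule Fcoset[OF that])
  have sub: "mcar (submod N (lker N N' \<alpha>)) = Psi ` RR k"
    "madd (submod N (lker N N' \<alpha>)) = madd N" "msmul (submod N (lker N N' \<alpha>)) = msmul N"
    by (simp_all add: submod_def K_eq)
  have hom: "lhom (submod N (lker N N' \<alpha>)) (quotmod (rowmod k) UU) F"
    unfolding lhom_def sub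
  proof (intro conjI ballI allI)
    show "F \<in> Psi ` RR k \<rightarrow> mcar (quotmod (rowmod k) UU)"
      using Fc q_car[OF Us] by auto
  next
    fix z1 z2 assume "z1 \<in> Psi ` RR k" "z2 \<in> Psi ` RR k"
    then obtain x1 x2 where h: "x1 \<in> RR k" "z1 = Psi x1" "x2 \<in> RR k" "z2 = Psi x2" by blast
    have s: "madd (rowmod k) x1 x2 \<in> RR k" by (simp add: radd)
    show "F (madd N z1 z2) = madd (quotmod (rowmod k) UU) (F z1) (F z2)"
      using h Fc[OF s] Fc q_add[OF Us h(1,3)] psi_add by simp
  next
    fix r z assume "z \<in> Psi ` RR k"
    then obtain x where h: "x \<in> RR k" "z = Psi x" by blast
    have s: "msmul (rowmod k) r x \<in> RR k" by (simp add: rsmul)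
    show "F (msmul N r z) = msmul (quotmod (rowmod k) UU) r (F z)"
      using h Fc[OF s] Fc q_smul[OF Us h(1)] psi_smul by simp
  qed
  have inj: "inj_on F (Psi ` RR k)"
  proof
    fix z1 z2 assume "z1 \<in> Psi ` RR k" "z2 \<in> Psi ` RR k" and e: "F z1 = F z2"
    then obtain x1 where h: "x1 \<in> RR k" "z1 = Psi x1" by blast
    have "x1 \<in> F z1" using h unfolding F_def by simp
    hence "x1 \<in> F z2" using e by simp
    thus "z1 = z2" using h unfolding F_def by simp
  qed
  have im: "F ` (Psi ` RR k) = mcar (quotmod (rowmod k) UU)"
    unfolding q_car[OF Us] image_image using Fc by (auto simp: image_iff)
  have "bij_betw F (mcar (submod N (lker N N' \<alpha>))) (mcar (quotmod (rowmod k) UU))"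
    unfolding sub bij_betw_def using inj im by blast
  thus ?thesis unfolding liso_def using hom by blast
qed

end


theorem mainTheorem3:
  fixes B B' :: "nat \<Rightarrow> nat \<Rightarrow> 'r::ring_1" and m k n :: nat
    and N :: "('r, 'n) lmod" and N' :: "('r, 'n2) lmod" and \<alpha> :: "'n \<Rightarrow> 'n2"
    and \<eta> :: "('r, 'r univ) lmod \<Rightarrow> ('n \<Rightarrow> 'r univ) \<Rightarrow> nat \<Rightarrow> 'r univ"
  assumes "k \<le> n"
    and "is_presentation m k n B B' N N' \<alpha> \<eta>"
  shows "liso (submod N (lker N N' \<alpha>))
              (quotmod (rowmod k)
                 {vecmat y B m k | y. y \<in> mcar (rowmod m) \<and> vecmat y B' m (n - k) = mzero (rowmod (n - k))})"
proof -
  have fN: "fp N" using assms(2) unfolding is_presentation_def by (elim conjE)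
  have fN': "fp N'" using assms(2) unfolding is_presentation_def by (elim conjE)
  have "\<exists>p q A f. lhom (rowmod p) N f \<and> f ` mcar (rowmod p) = mcar N \<and>
      lker (rowmod p) N f = {vecmat y A q p | y. y \<in> mcar (rowmod q)}"
    using fN unfolding fp_def by (rule conjunct2)
  then obtain p q A f where P: "lhom (rowmod p) N f" "f ` mcar (rowmod p) = mcar N"
      "lker (rowmod p) N f = {vecmat y A q p | y. y \<in> mcar (rowmod q)}"
    by (elim exE conjE) blast
  have "\<exists>p q A f. lhom (rowmod p) N' f \<and> f ` mcar (rowmod p) = mcar N' \<and>
      lker (rowmod p) N' f = {vecmat y A q p | y. y \<in> mcar (rowmod q)}"
    using fN' unfolding fp_def by (rule conjunct2)
  then obtain p' q' A' f' where P': "lhom (rowmod p') N' f'" "f' ` mcar (rowmod p') = mcar N'"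
      "lker (rowmod p') N' f' = {vecmat y A' q' p' | y. y \<in> mcar (rowmod q')}"
    by (elim exE conjE) blast
  interpret S: Setup m k n B B' N N' \<alpha> \<eta> p q A f p' q' A' f'
    by (rule Setup.intro[OF assms(1,2) P P'])
  show ?thesis by (rule S.main_iso)
qed

end
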